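(* Fix an integer $m\geq 2$. Let $\Gamma$ be a distance-regular graph with smallest eigenvalue at least $-m$, valency $k\ge 2$, diameter $D\ge 2$ and intersection number $a_1$. Then $k< m(a_1+m)$.
   Context: A finite connected graph $\Gamma$ with diameter $D$ is distance-regular if there are integers $b_i,c_i$ ($0\le i\le D$) such that for any vertices $x,y$ with $d(x,y)=i$, exactly $c_i$ neighbours of $y$ are at distance $i-1$ from $x$ and exactly $b_i$ neighbours of $y$ are at distance $i+1$ from $x$; its valency is $k=b_0$ and $a_i:=k-b_i-c_i$ (so $a_1$ is the number of common neighbours of two adjacent vertices). The smallest eigenvalue is that of the adjacency matrix. *)

theory Defs
  imports Complex_Main
begin

definition simple_graph :: "'a set \<Rightarrow> ('a \<Rightarrow> 'a \<Rightarrow> bool) \<Rightarrow> bool" where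
  "simple_graph V E \<longleftrightarrow> finite V \<and> V \<noteq> {} \<and>
     (\<forall>x y. E x y \<longrightarrow> x \<in> V \<and> y \<in> V) \<and>
     (\<forall>x y. E x y \<longrightarrow> E y x) \<and> (\<forall>x. \<not> E x x)"

fun walk :: "('a \<Rightarrow> 'a \<Rightarrow> bool) \<Rightarrow> nat \<Rightarrow> 'a \<Rightarrow> 'a \<Rightarrow> bool" where
  "walk E 0 x y = (x = y)"
| "walk E (Suc n) x y = (\<exists>z. E x z \<and> walk E n z y)"

definition connected_graph :: "'a set \<Rightarrow> ('a \<Rightarrow> 'a \<Rightarrow> bool) \<Rightarrow> bool" where
  "connected_graph V E \<longleftrightarrow> simple_graph V E \<and> (\<forall>x\<in>V. \<forall>y\<in>V. \<exists>n. walk E n x y)"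

definition gdist :: "('a \<Rightarrow> 'a \<Rightarrow> bool) \<Rightarrow> 'a \<Rightarrow> 'a \<Rightarrow> nat" where
  "gdist E x y = (LEAST n. walk E n x y)"

definition diameter :: "'a set \<Rightarrow> ('a \<Rightarrow> 'a \<Rightarrow> bool) \<Rightarrow> nat" where
  "diameter V E = Max {gdist E x y | x y. x \<in> V \<and> y \<in> V}"

text \<open>Distance-regular with intersection numbers b i, c i (for all i; for d(x,y)=0 the
  c-condition forces c 0 = 0, as in the usual convention).\<close>
definition distance_regular ::
  "'a set \<Rightarrow> ('a \<Rightarrow> 'a \<Rightarrow> bool) \<Rightarrow> (nat \<Rightarrow> nat) \<Rightarrow> (nat \<Rightarrow> nat) \<Rightarrow> bool" where
  "distance_regular V E b c \<longleftrightarrow> connected_graph V E \<and>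
     (\<forall>x\<in>V. \<forall>y\<in>V.
        card {z. E y z \<and> gdist E x z + 1 = gdist E x y} = c (gdist E x y) \<and>
        card {z. E y z \<and> gdist E x z = gdist E x y + 1} = b (gdist E x y))"

text \<open>Eigenvalue of the adjacency matrix (A f)(x) = sum of f over neighbours of x.\<close>
definition adj_eigenvalue :: "'a set \<Rightarrow> ('a \<Rightarrow> 'a \<Rightarrow> bool) \<Rightarrow> real \<Rightarrow> bool" where
  "adj_eigenvalue V E \<theta> \<longleftrightarrow> (\<exists>f :: 'a \<Rightarrow> real.
      (\<exists>x\<in>V. f x \<noteq> 0) \<and>
      (\<forall>x\<in>V. (\<Sum>y\<in>{y\<in>V. E x y}. f y) = \<theta> * f x))"

end

theory Submission
  imports Defs "HOL-Analysis.Function_Topology"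
begin

definition Af :: "'a set \<Rightarrow> ('a \<Rightarrow> 'a \<Rightarrow> bool) \<Rightarrow> ('a \<Rightarrow> real) \<Rightarrow> 'a \<Rightarrow> real" where
  "Af V E f x = (\<Sum>y\<in>{y\<in>V. E x y}. f y)"
definition Bf :: "'a set \<Rightarrow> ('a \<Rightarrow> 'a \<Rightarrow> bool) \<Rightarrow> ('a \<Rightarrow> real) \<Rightarrow> ('a \<Rightarrow> real) \<Rightarrow> real" where
  "Bf V E f g = (\<Sum>x\<in>V. f x * Af V E g x)"
definition Nf :: "'a set \<Rightarrow> ('a \<Rightarrow> real) \<Rightarrow> real" where
  "Nf V f = (\<Sum>x\<in>V. (f x)^2)"

lemma Bf_double:
  assumes "finite V"
  shows "Bf V E f g = (\<Sum>x\<in>V. \<Sum>y\<in>V. if E x y then f x * g y else 0)"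
  unfolding Bf_def Af_def
  by (simp add: sum_distrib_left sum.inter_filter[OF assms] if_distrib cong: if_cong)

lemma Bf_sym:
  assumes "finite V" "\<forall>x y. E x y \<longrightarrow> E y x"
  shows "Bf V E f g = Bf V E g f"
proof -
  have "Bf V E f g = (\<Sum>x\<in>V. \<Sum>y\<in>V. if E x y then f x * g y else 0)"
    by (rule Bf_double[OF assms(1)])
  also have "\<dots> = (\<Sum>y\<in>V. \<Sum>x\<in>V. if E x y then f x * g y else 0)" by (rule sum.swap)
  also have "\<dots> = (\<Sum>y\<in>V. \<Sum>x\<in>V. if E y x then g y * f x else 0)"
    using assms(2) by (intro sum.cong refl) (auto simp: mult.commute)
  also have "\<dots> = Bf V E g f" by (rule Bf_double[OF assms(1), symmetric])
  finally show ?thesis .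
qed

lemma Af_lin: "Af V E (\<lambda>y. a * f y + b * g y) x = a * Af V E f x + b * Af V E g x"
  unfolding Af_def by (simp add: sum.distrib sum_distrib_left)

lemma Bf_expand:
  assumes "finite V" "\<forall>x y. E x y \<longrightarrow> E y x"
  shows "Bf V E (\<lambda>y. f y + e * g y) (\<lambda>y. f y + e * g y)
     = Bf V E f f + 2 * e * Bf V E f g + e^2 * Bf V E g g"
proof -
  have A: "Af V E (\<lambda>y. f y + e * g y) x = Af V E f x + e * Af V E g x" for x
    using Af_lin[of V E 1 f e g x] by simp
  have "Bf V E (\<lambda>y. f y + e * g y) (\<lambda>y. f y + e * g y)
      = Bf V E f f + e * Bf V E f g + e * Bf V E g f + e^2 * Bf V E g g"
    unfolding Bf_def A by (simp add: algebra_simps sum.distrib sum_distrib_left power2_eq_square)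
  then show ?thesis using Bf_sym[OF assms, of g f] by simp
qed

lemma Nf_expand:
  "Nf V (\<lambda>y. f y + e * g y) = Nf V f + 2 * e * (\<Sum>x\<in>V. f x * g x) + e^2 * Nf V g"
  unfolding Nf_def by (simp add: algebra_simps sum.distrib sum_distrib_left power2_eq_square)

lemma Bf_scale: "Bf V E (\<lambda>y. c * f y) (\<lambda>y. c * f y) = c^2 * Bf V E f f"
proof -
  have "Af V E (\<lambda>y. c * f y) x = c * Af V E f x" for x
    unfolding Af_def by (simp add: sum_distrib_left)
  then show ?thesis unfolding Bf_def by (simp add: sum_distrib_left algebra_simps power2_eq_square)
qed

lemma Nf_scale: "Nf V (\<lambda>y. c * f y) = c^2 * Nf V f"
  unfolding Nf_def by (simp add: sum_distrib_left algebra_simps power2_eq_square)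

lemma Nf_nonneg: "Nf V f \<ge> 0" unfolding Nf_def by (simp add: sum_nonneg)

lemma Nf_zero: assumes "finite V" "Nf V f = 0" "x \<in> V" shows "f x = 0"
  using assms unfolding Nf_def by (simp add: sum_nonneg_eq_0_iff)

lemma Bf_restrict:
  "Bf V E (\<lambda>x. if x \<in> V then h x else 0) (\<lambda>x. if x \<in> V then h x else 0) = Bf V E h h"
  unfolding Bf_def Af_def by (intro sum.cong refl) auto

lemma Nf_restrict: "Nf V (\<lambda>x. if x \<in> V then h x else 0) = Nf V h"
  unfolding Nf_def by (intro sum.cong refl) auto

lemma compact_K:
  assumes "finite V"
  shows "compact {f::'a\<Rightarrow>real. (\<forall>x. x \<notin> V \<longrightarrow> f x = 0) \<and> Nf V f = 1}" (is "compact ?K")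
proof -
  define S where "S = (\<lambda>x::'a. if x \<in> V then {-1..1::real} else {0})"
  have "compactin (product_topology (\<lambda>_. euclideanreal) UNIV) (PiE UNIV S)"
    by (subst compactin_PiE) (auto simp: S_def)
  then have cP: "compact (PiE UNIV S)" by (simp add: euclidean_product_topology)
  have cl: "closed ?K"
    unfolding Nf_def
    by (intro closed_Collect_conj closed_Collect_all closed_Collect_imp closed_Collect_eq
        continuous_intros) auto
  have "?K = PiE UNIV S \<inter> ?K"
  proof (auto simp: S_def)
    fix f :: "'a \<Rightarrow> real" and x assume f: "Nf V f = 1" "x \<in> V"
    have "(f x)^2 \<le> Nf V f" unfolding Nf_def
      using f(2) assms by (intro member_le_sum) auto
    then have "\<bar>f x\<bar> \<le> 1" using f(1) by (simp add: abs_square_le_1)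
    then show "-1 \<le> f x" "f x \<le> 1" by auto
  qed
  then show ?thesis using compact_Int_closed[OF cP cl] by simp
qed


lemma ab_nonneg_zero:
  fixes r s :: real
  assumes "\<forall>e. 2 * e * r + e^2 * s \<ge> 0" "r \<ge> 0"
  shows "r = 0"
proof (rule ccontr)
  assume "r \<noteq> 0" then have r: "r > 0" using assms(2) by simp
  define e where "e = - r / (\<bar>s\<bar> + 1)"
  have d: "\<bar>s\<bar> + 1 > 0" by simp
  have "2 * e * r + e^2 * s \<le> 2 * e * r + e^2 * \<bar>s\<bar>"
    by (intro add_left_mono mult_left_mono) auto
  also have "\<dots> = r^2 * (\<bar>s\<bar> - 2 * (\<bar>s\<bar> + 1)) / (\<bar>s\<bar> + 1)^2"
  proof -
    have gen: "2 * (- r / a) * r + (- r / a)^2 * t = r^2 * (t - 2 * a) / a^2" if "a > 0" for a t :: real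
      using that by (simp add: field_simps power2_eq_square)
    show ?thesis unfolding e_def using gen[OF d] by simp
  qed
  also have "\<dots> < 0"
    using r d by (intro divide_neg_pos mult_pos_neg) auto
  finally show False using assms(1) by (meson not_le)
qed

lemma psd:
  assumes sg: "simple_graph V E"
    and ev: "\<forall>\<theta>. adj_eigenvalue V E \<theta> \<longrightarrow> \<theta> \<ge> L"
  shows "Bf V E h h \<ge> L * Nf V h"
proof -
  have fin: "finite V" and ne: "V \<noteq> {}" and sym: "\<forall>x y. E x y \<longrightarrow> E y x"
    using sg unfolding simple_graph_def by auto
  define K where "K = {f::'a\<Rightarrow>real. (\<forall>x. x \<notin> V \<longrightarrow> f x = 0) \<and> Nf V f = 1}"
  have cK: "compact K" unfolding K_def by (rule compact_K[OF fin])
  obtain v where v: "v \<in> V" using ne by auto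
  have sq: "(\<Sum>x\<in>V. (if x = v then 1 else 0::real)^2) = (\<Sum>x\<in>V. if x = v then 1 else 0)"
    by (rule sum.cong) auto
  have "(\<lambda>x. if x = v then 1 else 0::real) \<in> K"
    unfolding K_def Nf_def using v fin sq by simp
  then have Kne: "K \<noteq> {}" by auto
  have cont: "continuous_on K (\<lambda>f. Bf V E f f)"
    unfolding Bf_def Af_def by (intro continuous_intros continuous_on_subset[OF continuous_on_product_coordinates]) auto
  obtain f0 where f0K: "f0 \<in> K" and f0min: "\<And>f. f \<in> K \<Longrightarrow> Bf V E f0 f0 \<le> Bf V E f f"
    using continuous_attains_inf[OF cK Kne cont] by auto
  define lam where "lam = Bf V E f0 f0"
  have Nf0: "Nf V f0 = 1" using f0K unfolding K_def by auto
  have key: "Bf V E h h \<ge> lam * Nf V h" for h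
  proof -
    define h' where "h' = (\<lambda>x. if x \<in> V then h x else 0)"
    have eqs: "Bf V E h' h' = Bf V E h h" "Nf V h' = Nf V h"
      unfolding h'_def by (rule Bf_restrict, rule Nf_restrict)
    show ?thesis
    proof (cases "Nf V h = 0")
      case True
      then have "\<forall>x\<in>V. h x = 0" using Nf_zero[OF fin] by blast
      then have "Bf V E h h = 0" unfolding Bf_def by simp
      then show ?thesis using True by simp
    next
      case False
      define n where "n = Nf V h"
      have n: "n > 0" using False Nf_nonneg[of V h] unfolding n_def by linarith
      define h'' where "h'' = (\<lambda>x. (1 / sqrt n) * h' x)"
      have "Nf V h'' = (1 / sqrt n)^2 * n" unfolding h''_def Nf_scale eqs n_def ..
      also have "\<dots> = 1" using n by (simp add: power_divide)
      finally have "h'' \<in> K" unfolding K_def h''_def h'_def by auto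
      then have "lam \<le> Bf V E h'' h''" using f0min unfolding lam_def by blast
      also have "\<dots> = (1 / sqrt n)^2 * Bf V E h h" unfolding h''_def Bf_scale eqs ..
      also have "\<dots> = Bf V E h h / n" using n by (simp add: power_divide)
      finally have "lam * n \<le> Bf V E h h" using n by (simp add: field_simps)
      then show ?thesis unfolding n_def by simp
    qed
  qed
  define g where "g = (\<lambda>x. Af V E f0 x - lam * f0 x)"
  have lin: "Bf V E f0 g - lam * (\<Sum>x\<in>V. f0 x * g x) = Nf V g"
  proof -
    have "Bf V E f0 g = Bf V E g f0" by (rule Bf_sym[OF fin sym])
    then have "Bf V E f0 g - lam * (\<Sum>x\<in>V. f0 x * g x) = (\<Sum>x\<in>V. g x * (Af V E f0 x - lam * f0 x))"
      unfolding Bf_def by (simp add: sum_distrib_left sum_subtractf algebra_simps)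
    then show ?thesis unfolding Nf_def g_def by (simp add: power2_eq_square)
  qed
  have "\<forall>e. 2 * e * Nf V g + e^2 * (Bf V E g g - lam * Nf V g) \<ge> 0"
  proof
    fix e
    have "Bf V E (\<lambda>y. f0 y + e * g y) (\<lambda>y. f0 y + e * g y) \<ge> lam * Nf V (\<lambda>y. f0 y + e * g y)"
      by (rule key)
    then show "2 * e * Nf V g + e^2 * (Bf V E g g - lam * Nf V g) \<ge> 0"
      unfolding Bf_expand[OF fin sym] Nf_expand Nf0 lam_def[symmetric] lin[symmetric]
      by (simp add: algebra_simps)
  qed
  then have "Nf V g = 0" using ab_nonneg_zero Nf_nonneg by blast
  then have gz: "\<forall>x\<in>V. g x = 0" using Nf_zero[OF fin] by blast
  have "\<exists>x\<in>V. f0 x \<noteq> 0"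
  proof (rule ccontr)
    assume "\<not> ?thesis"
    then have "Nf V f0 = 0" unfolding Nf_def by simp
    then show False using Nf0 by simp
  qed
  then have "adj_eigenvalue V E lam"
    unfolding adj_eigenvalue_def using gz unfolding g_def Af_def by auto
  then have "lam \<ge> L" using ev by blast
  then have "lam * Nf V h \<ge> L * Nf V h" by (intro mult_right_mono Nf_nonneg)
  then show ?thesis using key[of h] by linarith
qed


lemma gdist_self: "gdist E x x = 0"
  unfolding gdist_def by (simp add: Least_eq_0)

lemma gdist_adj:
  assumes "simple_graph V E" "E x z"
  shows "gdist E x z = 1"
  unfolding gdist_def
proof (rule Least_equality)
  show "walk E 1 x z" using assms(2) by (simp add: One_nat_def)
next
  fix n assume w: "walk E n x z"
  show "1 \<le> n"
  proof (cases n)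
    case 0
    then have "x = z" using w by simp
    then show ?thesis using assms unfolding simple_graph_def by auto
  qed auto
qed

lemma walk_exit:
  "walk E n u y \<Longrightarrow> u \<in> S \<Longrightarrow> y \<notin> S \<Longrightarrow> \<exists>p q. p \<in> S \<and> q \<notin> S \<and> E p q"
proof (induction n arbitrary: u)
  case 0 then show ?case by simp
next
  case (Suc n)
  then obtain z where z: "E u z" "walk E n z y" by auto
  show ?case
  proof (cases "z \<in> S")
    case True then show ?thesis using Suc.IH[OF z(2) True Suc.prems(3)] by blast
  next
    case False then show ?thesis using z(1) Suc.prems(2) by blast
  qed
qed

definition ind :: "'a set \<Rightarrow> 'a \<Rightarrow> real" where "ind T x = (if x \<in> T then 1 else 0)"

lemma Af_ind:
  assumes "finite V"
  shows "Af V E (ind T) x = real (card {y\<in>V. E x y \<and> y \<in> T})"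
proof -
  have "Af V E (ind T) x = (\<Sum>y\<in>{y\<in>V. E x y}. if y \<in> T then 1 else 0)"
    unfolding Af_def ind_def ..
  also have "\<dots> = real (card ({y\<in>V. E x y} \<inter> T))"
    using assms by (simp add: sum.If_cases Int_def)
  also have "{y\<in>V. E x y} \<inter> T = {y\<in>V. E x y \<and> y \<in> T}" by auto
  finally show ?thesis .
qed

lemma Af_lin3: "Af V E (\<lambda>y. a * f y + g y + b * h y) x = a * Af V E f x + Af V E g x + b * Af V E h x"
  unfolding Af_def by (simp add: sum.distrib sum_distrib_left)

lemma sum_ind:
  assumes "finite V" "T \<subseteq> V"
  shows "(\<Sum>x\<in>V. ind T x * g x) = (\<Sum>x\<in>T. g x)"
proof -
  have "(\<Sum>x\<in>V. ind T x * g x) = (\<Sum>x\<in>V. if x \<in> T then g x else 0)"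
    unfolding ind_def by (intro sum.cong) auto
  also have "\<dots> = (\<Sum>x\<in>{x\<in>V. x \<in> T}. g x)" using assms(1) by (simp add: sum.inter_filter)
  also have "{x\<in>V. x \<in> T} = T" using assms(2) by auto
  finally show ?thesis .
qed


theorem lemma3p2:
  fixes V :: "'a set" and E :: "'a \<Rightarrow> 'a \<Rightarrow> bool" and b c :: "nat \<Rightarrow> nat" and m :: int
  assumes "m \<ge> 2"
    and "distance_regular V E b c"
    and "\<forall>\<theta>. adj_eigenvalue V E \<theta> \<longrightarrow> \<theta> \<ge> - real_of_int m"
    and "b 0 \<ge> 2"
    and "diameter V E \<ge> 2"
  shows "int (b 0) < m * ((int (b 0) - int (b 1) - int (c 1)) + m)"
proof -
  have sg: "simple_graph V E" and conn: "\<forall>x\<in>V. \<forall>y\<in>V. \<exists>n. walk E n x y"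
    and dr: "\<forall>x\<in>V. \<forall>y\<in>V.
        card {z. E y z \<and> gdist E x z + 1 = gdist E x y} = c (gdist E x y) \<and>
        card {z. E y z \<and> gdist E x z = gdist E x y + 1} = b (gdist E x y)"
    using assms(2) unfolding distance_regular_def connected_graph_def by auto
  have fin: "finite V" and ne: "V \<noteq> {}" and inV: "\<And>x y. E x y \<Longrightarrow> x \<in> V \<and> y \<in> V"
    and sym: "\<forall>x y. E x y \<longrightarrow> E y x" and irr: "\<And>x. \<not> E x x"
    using sg unfolding simple_graph_def by auto
  have finN: "finite {z. E y z}" for y
    by (rule finite_subset[OF _ fin]) (auto dest: inV)
  have deg: "card {z. E y z} = b 0" if "y \<in> V" for y
  proof -
    have "card {z. E y z \<and> gdist E y z = gdist E y y + 1} = b (gdist E y y)"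
      using dr that by blast
    moreover have "{z. E y z \<and> gdist E y z = gdist E y y + 1} = {z. E y z}"
      using gdist_adj[OF sg] gdist_self[of E y] by auto
    ultimately show ?thesis by (simp add: gdist_self)
  qed
  have a1b: "int (card {z. E y z \<and> E x z}) \<le> int (b 0) - int (b 1) - int (c 1)"
    if xy: "E x y" for x y
  proof -
    have xV: "x \<in> V" and yV: "y \<in> V" using inV[OF xy] by auto
    have g1: "gdist E x y = 1" by (rule gdist_adj[OF sg xy])
    define D0 where "D0 = {z. E y z \<and> gdist E x z + 1 = gdist E x y}"
    define D1 where "D1 = {z. E y z \<and> E x z}"
    define D2 where "D2 = {z. E y z \<and> gdist E x z = gdist E x y + 1}"
    have cD0: "card D0 = c 1" and cD2: "card D2 = b 1"
      using dr[rule_format, OF xV yV] g1 unfolding D0_def D2_def by simp_all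
    have sub: "D0 \<union> D1 \<union> D2 \<subseteq> {z. E y z}" unfolding D0_def D1_def D2_def by auto
    have fD: "finite D0" "finite D1" "finite D2"
      using finite_subset[OF sub finN[of y]] by auto
    have dis1: "D0 \<inter> D1 = {}" "(D0 \<union> D1) \<inter> D2 = {}"
      unfolding D0_def D1_def D2_def using gdist_adj[OF sg] g1 by auto
    have "card (D0 \<union> D1 \<union> D2) = card D0 + card D1 + card D2"
      using fD dis1 by (simp add: card_Un_disjoint)
    moreover have "card (D0 \<union> D1 \<union> D2) \<le> b 0"
      using card_mono[OF finN sub] deg[OF yV] by simp
    ultimately show ?thesis using cD0 cD2 unfolding D1_def by linarith
  qed
  define DS where "DS = {gdist E x y | x y. x \<in> V \<and> y \<in> V}"
  have "DS = (\<lambda>(x,y). gdist E x y) ` (V \<times> V)" unfolding DS_def by auto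
  then have "finite DS" using fin by simp
  moreover have "DS \<noteq> {}" using ne unfolding DS_def by auto
  ultimately have "diameter V E \<in> DS" unfolding diameter_def DS_def[symmetric] by (rule Max_in)
  then obtain x0 y0 where x0: "x0 \<in> V" and y0: "y0 \<in> V" and d2: "gdist E x0 y0 \<ge> 2"
    using assms(5) unfolding DS_def by auto
  have "x0 \<noteq> y0" using d2 gdist_self[of E x0] by auto
  moreover have "\<not> E x0 y0" using d2 gdist_adj[OF sg] by fastforce
  moreover obtain n where "walk E n x0 y0" using conn x0 y0 by blast
  ultimately obtain p q where pq: "p \<in> insert x0 {z. E x0 z}" "q \<notin> insert x0 {z. E x0 z}" "E p q"
    using walk_exit[of E n x0 y0 "insert x0 {z. E x0 z}"] by auto
  have xp: "E x0 p" using pq by auto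
  have qx0: "q \<noteq> x0" "\<not> E x0 q" "\<not> E q x0" using pq sym by auto
  define N0 where "N0 = {z. E x0 z}"
  have N0V: "N0 \<subseteq> V" unfolding N0_def using inV by auto
  have qV: "q \<in> V" using inV[OF pq(3)] by auto
  have cardN0: "card N0 = b 0" unfolding N0_def using deg[OF x0] .
  define cc where "cc = card {y\<in>N0. E q y}"
  have "p \<in> {y\<in>N0. E q y}" using xp pq(3) sym unfolding N0_def by auto
  then have cc1: "cc \<ge> 1" unfolding cc_def
    using finite_subset[OF _ finN[of x0]] unfolding N0_def
    by (metis (no_types, lifting) One_nat_def Suc_leI card_gt_0_iff empty_iff mem_Collect_eq subsetI)
  define M where "M = real_of_int m"
  have M2: "M \<ge> 2" unfolding M_def using assms(1) by simp
  define k where "k = real (b 0)"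
  define a where "a = real_of_int (int (b 0) - int (b 1) - int (c 1))"
  define t where "t = k / M"
  define s where "s = - real cc / M"
  define f where "f = (\<lambda>x. (-t) * ind {x0} x + ind N0 x + s * ind {q} x)"
  have Af_eq: "Af V E f x = (-t) * real (card {y\<in>V. E x y \<and> y \<in> {x0}})
      + real (card {y\<in>V. E x y \<and> y \<in> N0}) + s * real (card {y\<in>V. E x y \<and> y \<in> {q}})" for x
    unfolding f_def Af_lin3 Af_ind[OF fin] ..
  have Afx0: "Af V E f x0 = k"
  proof -
    have e1: "{y\<in>V. E x0 y \<and> y \<in> {x0}} = {}" using irr by auto
    have e2: "{y\<in>V. E x0 y \<and> y \<in> N0} = N0" using N0V unfolding N0_def by auto
    have e3: "{y\<in>V. E x0 y \<and> y \<in> {q}} = {}" using qx0 by auto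
    show ?thesis unfolding Af_eq e1 e2 e3 k_def cardN0 by simp
  qed
  have Afq: "Af V E f q = real cc"
  proof -
    have e1: "{y\<in>V. E q y \<and> y \<in> {x0}} = {}" using qx0 by auto
    have e2: "{y\<in>V. E q y \<and> y \<in> N0} = {y\<in>N0. E q y}" using N0V by auto
    have e3: "{y\<in>V. E q y \<and> y \<in> {q}} = {}" using irr by auto
    show ?thesis unfolding Af_eq e1 e2 e3 cc_def by simp
  qed
  have AfN: "Af V E f y = -t + real (card {z. E y z \<and> E x0 z}) + s * (if E y q then 1 else 0)" if "y \<in> N0" for y
  proof -
    have e1: "{z\<in>V. E y z \<and> z \<in> {x0}} = {x0}" using that sym x0 unfolding N0_def by auto
    have e2: "{z\<in>V. E y z \<and> z \<in> N0} = {z. E y z \<and> E x0 z}" using inV unfolding N0_def by auto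
    have e3: "{z\<in>V. E y z \<and> z \<in> {q}} = (if E y q then {q} else {})" using qV by auto
    show ?thesis unfolding Af_eq e1 e2 e3 by auto
  qed
  have Bff: "Bf V E f f = (-t) * Af V E f x0 + (\<Sum>y\<in>N0. Af V E f y) + s * Af V E f q"
  proof -
    have "Bf V E f f = (\<Sum>x\<in>V. (-t) * (ind {x0} x * Af V E f x) + ind N0 x * Af V E f x
          + s * (ind {q} x * Af V E f x))"
      unfolding Bf_def by (intro sum.cong refl) (simp add: f_def algebra_simps)
    also have "\<dots> = (-t) * (\<Sum>x\<in>V. ind {x0} x * Af V E f x) + (\<Sum>x\<in>V. ind N0 x * Af V E f x)
          + s * (\<Sum>x\<in>V. ind {q} x * Af V E f x)"
      by (simp only: sum.distrib sum_distrib_left)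
    also have "\<dots> = (-t) * Af V E f x0 + (\<Sum>y\<in>N0. Af V E f y) + s * Af V E f q"
      using sum_ind[OF fin, of "{x0}"] sum_ind[OF fin N0V] sum_ind[OF fin, of "{q}"] x0 qV by simp
    finally show ?thesis .
  qed
  have sumN: "(\<Sum>y\<in>N0. Af V E f y) \<le> -t * k + k * a + s * real cc"
  proof -
    have "(\<Sum>y\<in>N0. Af V E f y) = (\<Sum>y\<in>N0. -t + real (card {z. E y z \<and> E x0 z}) + s * (if E y q then 1 else 0))"
      using AfN by (rule sum.cong[OF refl])
    also have "\<dots> = -t * real (card N0) + (\<Sum>y\<in>N0. real (card {z. E y z \<and> E x0 z}))
        + s * (\<Sum>y\<in>N0. if E y q then 1 else 0)"
      by (simp add: sum.distrib sum_distrib_left sum_subtractf mult.commute)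
    also have "(\<Sum>y\<in>N0. if E y q then 1 else 0) = real cc"
    proof -
      have "(\<Sum>y\<in>N0. if E y q then 1 else 0) = (\<Sum>y\<in>N0. if E q y then 1 else (0::real))"
        using sym by (intro sum.cong) auto
      also have "\<dots> = real cc" unfolding cc_def
        using finN[of x0] unfolding N0_def by (simp add: sum.If_cases Int_def)
      finally show ?thesis .
    qed
    also have "(\<Sum>y\<in>N0. real (card {z. E y z \<and> E x0 z})) \<le> real (card N0) * a"
    proof -
      have "(\<Sum>y\<in>N0. real (card {z. E y z \<and> E x0 z})) \<le> (\<Sum>y\<in>N0. a)"
      proof (rule sum_mono)
        fix y assume "y \<in> N0"
        then have "int (card {z. E y z \<and> E x0 z}) \<le> int (b 0) - int (b 1) - int (c 1)"
          using a1b unfolding N0_def by auto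
        then show "real (card {z. E y z \<and> E x0 z}) \<le> a" unfolding a_def
          by (metis of_int_le_iff of_int_of_nat_eq)
      qed
      then show ?thesis by simp
    qed
    finally show ?thesis unfolding cardN0 k_def by (simp add: algebra_simps)
  qed
  have Nff: "Nf V f = t^2 + k + s^2"
  proof -
    have x0N: "x0 \<notin> N0" using irr unfolding N0_def by auto
    have qN: "q \<notin> N0" using qx0 unfolding N0_def by auto
    have "Nf V f = (\<Sum>x\<in>V. t^2 * ind {x0} x * 1 + ind N0 x * 1 + s^2 * ind {q} x * 1)"
      unfolding Nf_def f_def using x0N qN qx0 by (intro sum.cong refl) (auto simp: ind_def)
    also have "\<dots> = t^2 * (\<Sum>x\<in>V. ind {x0} x * 1) + (\<Sum>x\<in>V. ind N0 x * 1) + s^2 * (\<Sum>x\<in>V. ind {q} x * 1)"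
      by (simp add: sum.distrib sum_distrib_left mult.assoc)
    also have "\<dots> = t^2 + k + s^2"
    proof -
      have "(\<Sum>x\<in>V. ind {x0} x * 1) = 1" using sum_ind[OF fin, of "{x0}" "\<lambda>_. 1"] x0 by simp
      moreover have "(\<Sum>x\<in>V. ind {q} x * 1) = 1" using sum_ind[OF fin, of "{q}" "\<lambda>_. 1"] qV by simp
      moreover have "(\<Sum>x\<in>V. ind N0 x * 1) = k" using sum_ind[OF fin N0V, of "\<lambda>_. 1"] cardN0 k_def by simp
      ultimately show ?thesis by simp
    qed
    finally show ?thesis .
  qed
  have P: "Bf V E f f \<ge> - M * Nf V f"
    using psd[OF sg, of "- M"] assms(3) unfolding M_def by auto
  have ineq: "-2 * t * k + k * a + 2 * s * real cc + M * (t^2 + k + s^2) \<ge> 0"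
    using P Bff Afx0 Afq sumN Nff by (simp add: algebra_simps)
  have "M * (-2 * t * k + k * a + 2 * s * real cc + M * (t^2 + k + s^2))
      = k * (a * M + M^2 - k) - real cc ^ 2"
    unfolding t_def s_def using M2 by (simp add: field_simps power2_eq_square)
  moreover have "M * (-2 * t * k + k * a + 2 * s * real cc + M * (t^2 + k + s^2)) \<ge> 0"
    using ineq M2 by simp
  moreover have "real cc ^ 2 \<ge> 1" using cc1 by simp
  ultimately have "k * (a * M + M^2 - k) > 0" by linarith
  moreover have "k > 0" unfolding k_def using assms(4) by simp
  ultimately have "a * M + M^2 - k > 0" using zero_less_mult_pos by blast
  then have "real_of_int (int (b 0)) < real_of_int (m * ((int (b 0) - int (b 1) - int (c 1)) + m))"
    unfolding a_def M_def k_def by (simp add: algebra_simps power2_eq_square)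
  then show ?thesis by (simp only: of_int_less_iff)
qed

end
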